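(* Let $p\equiv1\pmod5$ be prime and let $\psi$ be a character of order $5$ of $\mathbb{F}_p^*$. If $a,b,c\in\mathbb{Z}$ satisfy $a+c\not\equiv0\pmod5$ and $b+c\not\equiv0\pmod5$, then \[ \sum_{\chi}\chi(-1)\,J(\bar\chi\psi^a,\bar\chi\psi^b,\chi\psi^c)=-(p-1), \] where the sum runs over all multiplicative characters $\chi$ of $\mathbb{F}_p^*$.
   Context: Multiplicative characters of $\mathbb{F}_p^*$ are extended to $\mathbb{F}_p$ by $\chi(0):=0$, including for the trivial character; $\bar\chi$ denotes the inverse character. For characters $\chi_1,\dots,\chi_k$, the generalized Jacobi sum is $J(\chi_1,\dots,\chi_k):=\sum_{t_1+\dots+t_k=1,\ t_i\in\mathbb{F}_p}\chi_1(t_1)\cdots\chi_k(t_k)$. *)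

theory Defs
  imports Complex_Main "HOL-Computational_Algebra.Primes"
begin

text \<open>F_p is represented by the residues {0..<p} (nat). A multiplicative character
of F_p^* extended by chi(0)=0 is a function nat => complex that is multiplicative on
{1..<p} (modulo p), sends 1 to 1, vanishes at 0 and (normalisation) outside {0..<p}.\<close>

definition mchar :: "nat \<Rightarrow> (nat \<Rightarrow> complex) \<Rightarrow> bool" where
  "mchar p \<chi> \<longleftrightarrow> \<chi> 0 = 0 \<and> \<chi> 1 = 1 \<and>
     (\<forall>x\<in>{1..<p}. \<forall>y\<in>{1..<p}. \<chi> ((x * y) mod p) = \<chi> x * \<chi> y) \<and>
     (\<forall>x. p \<le> x \<longrightarrow> \<chi> x = 0)"

definition chars :: "nat \<Rightarrow> (nat \<Rightarrow> complex) set" where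
  "chars p = {\<chi>. mchar p \<chi>}"

text \<open>Inverse character (inverse 0 = 0 in Isabelle, so chi-bar(0) = 0).\<close>
definition cinv :: "(nat \<Rightarrow> complex) \<Rightarrow> nat \<Rightarrow> complex" where
  "cinv \<chi> = (\<lambda>x. inverse (\<chi> x))"

definition cmul :: "(nat \<Rightarrow> complex) \<Rightarrow> (nat \<Rightarrow> complex) \<Rightarrow> nat \<Rightarrow> complex" where
  "cmul \<chi> \<phi> = (\<lambda>x. \<chi> x * \<phi> x)"

text \<open>Integer power of a character, again with value 0 at 0 (also for exponent 0).\<close>
definition cpow :: "(nat \<Rightarrow> complex) \<Rightarrow> int \<Rightarrow> nat \<Rightarrow> complex" where
  "cpow \<chi> a = (\<lambda>x. if \<chi> x = 0 then 0 else \<chi> x powi a)"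

definition char_order :: "nat \<Rightarrow> (nat \<Rightarrow> complex) \<Rightarrow> nat" where
  "char_order p \<chi> = (LEAST n. n > 0 \<and> (\<forall>x\<in>{1..<p}. \<chi> x ^ n = 1))"

definition jacobi3 :: "nat \<Rightarrow> (nat \<Rightarrow> complex) \<Rightarrow> (nat \<Rightarrow> complex) \<Rightarrow> (nat \<Rightarrow> complex) \<Rightarrow> complex" where
  "jacobi3 p \<chi>1 \<chi>2 \<chi>3 =
     (\<Sum>(t1, t2, t3) \<in> {(t1, t2, t3). t1 < p \<and> t2 < p \<and> t3 < p \<and> (t1 + t2 + t3) mod p = 1 mod p}.
        \<chi>1 t1 * \<chi>2 t2 * \<chi>3 t3)"

end

theory Submission
  imports Defs "HOL-Number_Theory.Number_Theory"
begin

lemma mchar_0: "mchar p \<chi> \<Longrightarrow> \<chi> 0 = 0" by (simp add: mchar_def)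
lemma mchar_1: "mchar p \<chi> \<Longrightarrow> \<chi> 1 = 1" by (simp add: mchar_def)
lemma mchar_mult: "mchar p \<chi> \<Longrightarrow> x \<in> {1..<p} \<Longrightarrow> y \<in> {1..<p} \<Longrightarrow> \<chi> ((x * y) mod p) = \<chi> x * \<chi> y"
  unfolding mchar_def by blast
lemma mchar_ge: "mchar p \<chi> \<Longrightarrow> p \<le> x \<Longrightarrow> \<chi> x = 0" by (simp add: mchar_def)

lemma notdvdU: "x \<in> {1..<p} \<Longrightarrow> \<not> (p::nat) dvd x"
  by (auto simp: nat_dvd_not_less)

lemma modU: "prime (p::nat) \<Longrightarrow> x \<in> {1..<p} \<Longrightarrow> y \<in> {1..<p} \<Longrightarrow> (x*y) mod p \<in> {1..<p}"
proof -
  assume p: "prime p" and x: "x \<in> {1..<p}" and y: "y \<in> {1..<p}"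
  have "\<not> p dvd x" "\<not> p dvd y" using x y notdvdU by blast+
  hence "\<not> p dvd x*y" using p prime_dvd_mult_iff by blast
  hence "(x*y) mod p \<noteq> 0" by (simp add: dvd_eq_mod_eq_0)
  moreover have "(x*y) mod p < p" using p prime_gt_0_nat by simp
  ultimately show ?thesis by simp
qed

lemma mchar_pow:
  fixes p :: nat
  assumes p: "prime p" and c: "mchar p \<chi>" and g: "g \<in> {1..<p}"
  shows "\<chi> (g^k mod p) = \<chi> g ^ k \<and> g^k mod p \<in> {1..<p}"
proof (induction k)
  case 0
  have "1 < p" using p prime_gt_1_nat by blast
  then show ?case using mchar_1[OF c] by simp
next
  case (Suc k)
  have e: "g^Suc k mod p = ((g^k mod p) * g) mod p" by (metis mod_mult_left_eq mult.commute power_Suc)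
  have "\<chi> (g^Suc k mod p) = \<chi> (g^k mod p) * \<chi> g" unfolding e
    using Suc g by (intro mchar_mult[OF c]) auto
  moreover have "g^Suc k mod p \<in> {1..<p}" unfolding e using Suc g modU[OF p] by blast
  ultimately show ?case using Suc by simp
qed

lemma mchar_fermat:
  fixes p :: nat
  assumes p: "prime p" and c: "mchar p \<chi>" and x: "x \<in> {1..<p}"
  shows "\<chi> x ^ (p-1) = 1"
proof -
  have "\<not> p dvd x" using x notdvdU by blast
  hence "x^(p-1) mod p = 1 mod p" using fermat_theorem[OF p] unfolding cong_def by blast
  moreover have "1 < p" using p prime_gt_1_nat by blast
  ultimately have "x^(p-1) mod p = 1" by simp
  thus ?thesis using mchar_pow[OF p c x, of "p-1"] mchar_1[OF c] by simp
qed

lemma mchar_nz: 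
  fixes p :: nat
  assumes "prime p" "mchar p \<chi>" "x \<in> {1..<p}" shows "\<chi> x \<noteq> 0"
proof
  assume "\<chi> x = 0"
  moreover have "p - 1 > 0" using assms(1) prime_gt_1_nat by simp
  ultimately have "\<chi> x ^ (p-1) = 0" by simp
  thus False using mchar_fermat[OF assms] by (simp add: power_0_left)
qed

lemma mchar_off: "mchar p \<chi> \<Longrightarrow> x \<notin> {1..<p} \<Longrightarrow> \<chi> x = 0"
  by (cases "x = 0") (auto simp: mchar_0 mchar_ge)

lemma mult_bij:
  fixes p :: nat
  assumes p: "prime p" and x: "x \<in> {1..<p}"
  shows "bij_betw (\<lambda>t. (x*t) mod p) {1..<p} {1..<p}"
proof -
  have inj: "inj_on (\<lambda>t. (x*t) mod p) {1..<p}"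
  proof (rule inj_onI)
    fix s t assume s: "s \<in> {1..<p}" and t: "t \<in> {1..<p}" and e: "(x*s) mod p = (x*t) mod p"
    have "coprime p x" by (rule prime_imp_coprime[OF p notdvdU[OF x]])
    hence "coprime x p" by (simp add: coprime_commute)
    have "[x*s = x*t] (mod p)" using e by (simp add: cong_def)
    hence "[s = t] (mod p)" using cong_mult_lcancel_nat[OF \<open>coprime x p\<close>] by simp
    hence "s mod p = t mod p" by (simp add: cong_def)
    thus "s = t" using s t by simp
  qed
  have sub: "(\<lambda>t. (x*t) mod p) ` {1..<p} \<subseteq> {1..<p}" using modU[OF p x] by blast
  have "(\<lambda>t. (x*t) mod p) ` {1..<p} = {1..<p}"
    by (rule card_subset_eq[OF finite_atLeastLessThan sub]) (rule card_image[OF inj])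
  thus ?thesis using inj by (simp add: bij_betw_def)
qed

lemma mod_inverse_ex:
  fixes p :: nat
  assumes p: "prime p" and x: "x \<in> {1..<p}"
  shows "\<exists>s\<in>{1..<p}. (x*s) mod p = 1"
proof -
  have "1 \<in> {1..<p}" using prime_gt_1_nat[OF p] by simp
  moreover have "(\<lambda>t. (x*t) mod p) ` {1..<p} = {1..<p}" using mult_bij[OF p x] by (simp add: bij_betw_def)
  ultimately have "1 \<in> (\<lambda>t. (x*t) mod p) ` {1..<p}" by simp
  then obtain s where s1: "1 = (x*s) mod p" and s2: "s \<in> {1..<p}" by (rule imageE)
  show ?thesis by (rule bexI[of _ s]) (use s1 s2 in simp_all)
qed

locale gen =
  fixes p :: nat and g :: nat
  assumes p: "prime p" and p2: "2 < p" and gU: "g \<in> {1..<p}"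
    and bij: "bij_betw (\<lambda>i. g^i mod p) {..<p-1} {1..<p}"
begin

definition ind :: "nat \<Rightarrow> nat" where "ind x = inv_into {..<p-1} (\<lambda>i. g^i mod p) x"

definition chz :: "complex \<Rightarrow> nat \<Rightarrow> complex" where
  "chz z x = (if x \<in> {1..<p} then z ^ ind x else 0)"

lemma ind: "x \<in> {1..<p} \<Longrightarrow> ind x < p - 1 \<and> g ^ ind x mod p = x"
proof -
  assume x: "x \<in> {1..<p}"
  have "x \<in> (\<lambda>i. g^i mod p) ` {..<p-1}" using bij x by (simp add: bij_betw_def)
  thus ?thesis unfolding ind_def using inv_into_into[of x "\<lambda>i. g^i mod p" "{..<p-1}"]
    f_inv_into_f[of x "\<lambda>i. g^i mod p" "{..<p-1}"] by simp
qed

lemma ind_pow: "i < p - 1 \<Longrightarrow> ind (g^i mod p) = i"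
  unfolding ind_def using bij_betw_inv_into_left[OF bij, of i] by simp

lemma g_order: "g^(p-1) mod p = 1"
proof -
  have "\<not> p dvd g" using gU notdvdU by blast
  hence "g^(p-1) mod p = 1 mod p" using fermat_theorem[OF p] unfolding cong_def by blast
  also have "(1::nat) mod p = 1" using p2 by simp
  finally show ?thesis .
qed

lemma pow_mod_order: "g^k mod p = g^(k mod (p-1)) mod p"
proof -
  have "g^k = g^((k div (p-1))*(p-1) + k mod (p-1))" by (subst div_mult_mod_eq) (rule refl)
  also have "\<dots> = (g^(p-1))^(k div (p-1)) * g^(k mod (p-1))"
    by (simp only: power_add mult.commute[of "k div (p-1)"] power_mult)
  finally have e: "g^k = (g^(p-1))^(k div (p-1)) * g^(k mod (p-1))" .
  have "[g^(p-1) = 1] (mod p)" using g_order p2 by (simp add: cong_def)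
  hence "[(g^(p-1))^(k div (p-1)) * g^(k mod (p-1)) = 1^(k div (p-1)) * g^(k mod (p-1))] (mod p)"
    by (intro cong_mult cong_pow cong_refl)
  thus ?thesis unfolding e by (simp add: cong_def)
qed

lemma zpow_mod: assumes z: "z^(p-1) = (1::complex)" shows "z^k = z^(k mod (p-1))"
proof -
  have "z^k = z^((k div (p-1))*(p-1) + k mod (p-1))" by (subst div_mult_mod_eq) (rule refl)
  also have "\<dots> = (z^(p-1))^(k div (p-1)) * z^(k mod (p-1))"
    by (simp only: power_add mult.commute[of "k div (p-1)"] power_mult)
  finally show ?thesis using z by simp
qed

lemma ind_mult: "x \<in> {1..<p} \<Longrightarrow> y \<in> {1..<p} \<Longrightarrow> ind ((x*y) mod p) = (ind x + ind y) mod (p-1)"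
proof -
  assume x: "x \<in> {1..<p}" and y: "y \<in> {1..<p}"
  have "(x*y) mod p = ((g^ind x mod p) * (g^ind y mod p)) mod p" using ind x y by simp
  also have "\<dots> = g^(ind x + ind y) mod p" by (simp add: mod_mult_eq power_add)
  also have "\<dots> = g^((ind x + ind y) mod (p-1)) mod p" by (rule pow_mod_order)
  finally show ?thesis using ind_pow p2 by simp
qed

lemma chz_mchar: assumes z: "z^(p-1) = 1" shows "mchar p (chz z)"
  unfolding mchar_def
proof (intro conjI ballI allI impI)
  show "chz z 0 = 0" by (simp add: chz_def)
  have "ind 1 = 0" using ind_pow[of 0] p2 by simp
  thus "chz z 1 = 1" using p2 by (simp add: chz_def)
  fix x y assume x: "x \<in> {1..<p}" and y: "y \<in> {1..<p}"
  have "(x*y) mod p \<in> {1..<p}" using modU[OF p x y] .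
  thus "chz z ((x*y) mod p) = chz z x * chz z y"
    using x y ind_mult[OF x y] zpow_mod[OF z, of "ind x + ind y"] by (simp add: chz_def power_add)
next
  fix x :: nat assume "p \<le> x" thus "chz z x = 0" by (simp add: chz_def)
qed

lemma ind_g: "ind g = 1"
proof -
  have "g^1 mod p = g" using gU by simp
  thus ?thesis using ind_pow[of 1] p2 by simp
qed

lemma char_eq_chz: assumes c: "mchar p \<chi>" shows "\<chi> = chz (\<chi> g)"
proof
  fix x show "\<chi> x = chz (\<chi> g) x"
  proof (cases "x \<in> {1..<p}")
    case True
    then show ?thesis using ind[OF True] mchar_pow[OF p c gU, of "ind x"] by (simp add: chz_def)
  next
    case False
    then show ?thesis unfolding chz_def using mchar_off[OF c False] by (simp only: if_not_P[OF False] if_False)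
  qed
qed

lemma chars_eq: "chars p = chz ` {z. z^(p-1) = 1}"
proof
  show "chars p \<subseteq> chz ` {z. z^(p-1) = 1}"
  proof
    fix \<chi> assume "\<chi> \<in> chars p"
    hence c: "mchar p \<chi>" by (simp add: chars_def)
    have "\<chi> g ^ (p-1) = 1" using mchar_fermat[OF p c gU] .
    thus "\<chi> \<in> chz ` {z. z^(p-1) = 1}" using char_eq_chz[OF c] by blast
  qed
  show "chz ` {z. z^(p-1) = 1} \<subseteq> chars p" using chz_mchar by (auto simp: chars_def)
qed

lemma chz_inj: "inj_on chz {z. z^(p-1) = 1}"
proof (rule inj_onI)
  fix z w assume "chz z = chz w"
  hence "chz z g = chz w g" by simp
  thus "z = w" using gU ind_g by (simp add: chz_def)
qed

lemma card_chars: "card (chars p) = p - 1" and finite_chars: "finite (chars p)"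
proof -
  have pos: "p - 1 > 0" using p2 by simp
  have "card (chz ` {z. z^(p-1) = 1}) = card {z::complex. z^(p-1) = 1}" by (rule card_image[OF chz_inj])
  also have "\<dots> = p - 1" by (rule card_roots_unity_eq[OF pos])
  finally show "card (chars p) = p - 1" unfolding chars_eq .
  have pos1: "1 \<le> p - 1" using p2 by simp
  have "finite {z::complex. z^(p-1) = 1}" by (rule finite_roots_unity[OF pos1])
  thus "finite (chars p)" unfolding chars_eq by (rule finite_imageI)
qed

lemma nontriv: assumes y: "y \<in> {1..<p}" "y \<noteq> 1" shows "\<exists>\<chi>\<in>chars p. \<chi> y \<noteq> 1"
proof -
  define n where "n = p - 1"
  have n: "n > 0" using p2 by (simp add: n_def)
  define w where "w = cis (2 * pi / real n)"
  have wk: "w ^ k = cis (2 * pi * real k / real n)" for k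
    by (simp add: w_def DeMoivre mult_ac)
  have "w ^ n = 1" using n by (simp add: wk complex_eq_iff)
  hence c: "chz w \<in> chars p" using chz_mchar by (simp add: chars_def n_def)
  have i: "ind y < n" using ind[OF y(1)] n_def by simp
  have "ind y \<noteq> 0"
  proof
    assume "ind y = 0"
    hence "y = 1 mod p" using ind[OF y(1)] by (metis power_0)
    also have "(1::nat) mod p = 1" using p2 by simp
    finally show False using y(2) by simp
  qed
  have "w ^ ind y \<noteq> w ^ 0"
  proof
    assume "w ^ ind y = w ^ 0"
    hence "ind y = 0" using bij_betw_roots_unity[OF n] i n unfolding bij_betw_def inj_on_def wk by auto
    thus False using \<open>ind y \<noteq> 0\<close> by simp
  qed
  hence "chz w y \<noteq> 1" using y by (simp add: chz_def)
  thus ?thesis using c by blast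
qed

end

lemma cmul_mchar: assumes a: "mchar p \<chi>" and b: "mchar p \<phi>" shows "mchar p (cmul \<chi> \<phi>)"
  unfolding mchar_def
proof (intro conjI ballI allI impI)
  show "cmul \<chi> \<phi> 0 = 0" using mchar_0[OF a] by (simp add: cmul_def)
  show "cmul \<chi> \<phi> 1 = 1" using mchar_1[OF a] mchar_1[OF b] by (simp add: cmul_def)
  fix x y assume x: "x \<in> {1..<p}" and y: "y \<in> {1..<p}"
  show "cmul \<chi> \<phi> ((x*y) mod p) = cmul \<chi> \<phi> x * cmul \<chi> \<phi> y"
    using mchar_mult[OF a x y] mchar_mult[OF b x y] by (simp add: cmul_def mult_ac)
next
  fix x :: nat assume "p \<le> x" thus "cmul \<chi> \<phi> x = 0" using mchar_ge[OF a] by (simp add: cmul_def)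
qed

lemma gen_exists:
  fixes p :: nat assumes p: "prime p" and p2: "2 < p" shows "\<exists>g. gen p g"
proof -
  obtain g0 where "residue_primroot p g0" using prime_primitive_root_exists[of p] p p2 by auto
  hence r: "residue_primroot p (g0 mod p)" by simp
  define g where "g = g0 mod p"
  have r': "residue_primroot p g" using r by (simp only: g_def)
  have gp: "g < p" using p2 unfolding g_def by simp
  have p1: "1 < p" using p2 by simp
  have "bij_betw (\<lambda>i. g^i mod p) {..<totient p} (totatives p)"
    by (rule residue_primroot_is_generator[OF p1 r'])
  moreover have "totient p = p - 1" by (rule totient_prime[OF p])
  moreover have "totatives p = {1..<p}" unfolding totatives_prime[OF p] by auto
  ultimately have b: "bij_betw (\<lambda>i. g^i mod p) {..<p-1} {1..<p}" by simp
  have im: "(\<lambda>i. g^i mod p) ` {..<p-1} = {1..<p}" using b by (simp add: bij_betw_def)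
  have "(1::nat) \<in> {..<p-1}" using p2 by simp
  hence "g^1 mod p \<in> (\<lambda>i. g^i mod p) ` {..<p-1}" by (rule imageI)
  hence "g^1 mod p \<in> {1..<p}" unfolding im .
  hence "g \<in> {1..<p}" using gp by simp
  thus ?thesis using b p p2 by (intro exI[of _ g]) (simp add: gen_def)
qed

context gen
begin

lemma orth: assumes y: "y \<in> {1..<p}"
  shows "(\<Sum>\<chi>\<in>chars p. \<chi> y) = (if y = 1 then of_nat (p - 1) else 0)"
proof (cases "y = 1")
  case True
  have "(\<Sum>\<chi>\<in>chars p. \<chi> y) = (\<Sum>\<chi>\<in>chars p. 1)"
    using True by (intro sum.cong refl) (metis mchar_1 chars_def mem_Collect_eq)
  also have "\<dots> = of_nat (p - 1)" using card_chars by simp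
  finally show ?thesis using True by simp
next
  case False
  obtain \<chi>0 where c0: "\<chi>0 \<in> chars p" and ny: "\<chi>0 y \<noteq> 1" using nontriv[OF y False] by blast
  have m0: "mchar p \<chi>0" using c0 by (simp add: chars_def)
  have inj: "inj_on (cmul \<chi>0) (chars p)"
  proof (rule inj_onI)
    fix \<chi>1 \<chi>2 assume c1: "\<chi>1 \<in> chars p" and c2: "\<chi>2 \<in> chars p" and e: "cmul \<chi>0 \<chi>1 = cmul \<chi>0 \<chi>2"
    show "\<chi>1 = \<chi>2"
    proof
      fix x show "\<chi>1 x = \<chi>2 x"
      proof (cases "x \<in> {1..<p}")
        case True
        have "\<chi>0 x * \<chi>1 x = \<chi>0 x * \<chi>2 x" using fun_cong[OF e, of x] by (simp add: cmul_def)
        moreover have "\<chi>0 x \<noteq> 0" using mchar_nz[OF p m0 True] .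
        ultimately show ?thesis by simp
      next
        case False
        thus ?thesis using mchar_off[of p \<chi>1 x] mchar_off[of p \<chi>2 x] c1 c2 by (simp add: chars_def)
      qed
    qed
  qed
  have sub: "cmul \<chi>0 ` chars p \<subseteq> chars p" using cmul_mchar m0 by (auto simp: chars_def)
  have im: "cmul \<chi>0 ` chars p = chars p"
    by (rule card_subset_eq[OF finite_chars sub]) (rule card_image[OF inj])
  have "(\<Sum>\<chi>\<in>chars p. \<chi> y) = (\<Sum>\<chi>\<in>cmul \<chi>0 ` chars p. \<chi> y)" using im by simp
  also have "\<dots> = (\<Sum>\<chi>\<in>chars p. cmul \<chi>0 \<chi> y)" by (rule sum.reindex[OF inj, unfolded comp_def])
  also have "\<dots> = \<chi>0 y * (\<Sum>\<chi>\<in>chars p. \<chi> y)" by (simp add: cmul_def sum_distrib_left)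
  finally have "(1 - \<chi>0 y) * (\<Sum>\<chi>\<in>chars p. \<chi> y) = 0" by (simp add: algebra_simps)
  hence "(\<Sum>\<chi>\<in>chars p. \<chi> y) = 0" using ny by simp
  thus ?thesis using False by simp
qed

lemma orth2: assumes A: "A \<in> {1..<p}" and B: "B \<in> {1..<p}"
  shows "(\<Sum>\<chi>\<in>chars p. \<chi> A * inverse (\<chi> B)) = (if A = B then of_nat (p - 1) else 0)"
proof -
  obtain s where s: "s \<in> {1..<p}" and bs: "(B*s) mod p = 1" using mod_inverse_ex[OF p B] by blast
  have as: "(A*s) mod p \<in> {1..<p}" using modU[OF p A s] .
  have "(\<Sum>\<chi>\<in>chars p. \<chi> A * inverse (\<chi> B)) = (\<Sum>\<chi>\<in>chars p. \<chi> ((A*s) mod p))"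
  proof (rule sum.cong[OF refl])
    fix \<chi> assume "\<chi> \<in> chars p"
    hence c: "mchar p \<chi>" by (simp add: chars_def)
    have "\<chi> B * \<chi> s = 1" using mchar_mult[OF c B s] bs mchar_1[OF c] by simp
    hence "inverse (\<chi> B) = \<chi> s" by (simp add: inverse_unique)
    thus "\<chi> A * inverse (\<chi> B) = \<chi> ((A*s) mod p)" using mchar_mult[OF c A s] by simp
  qed
  also have "\<dots> = (if (A*s) mod p = 1 then of_nat (p - 1) else 0)" by (rule orth[OF as])
  also have "((A*s) mod p = 1) = (A = B)"
  proof
    assume "(A*s) mod p = 1"
    hence "(s*A) mod p = (s*B) mod p" using bs by (simp add: mult.commute)
    moreover have inj: "inj_on (\<lambda>t. (s*t) mod p) {1..<p}" using mult_bij[OF p s] by (simp add: bij_betw_def)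
    ultimately show "A = B" using inj_onD[OF inj _ A B] by simp
  next
    assume "A = B" thus "(A*s) mod p = 1" using bs by simp
  qed
  finally show ?thesis .
qed

end

lemma charT:
  fixes p t1 t2 t3 :: nat
  assumes p: "prime p" and u1: "t1 \<in> {1..<p}" and u2: "t2 \<in> {1..<p}" and u3: "t3 \<in> {1..<p}"
  shows "((t1+t2+t3) mod p = 1 mod p \<and> ((p-1)*t3) mod p = (t1*t2) mod p) \<longleftrightarrow>
         ((t1 = 1 \<or> t2 = 1) \<and> t3 = ((p-1)*t1*t2) mod p)"
proof -
  define P where "P = int p"
  have P: "prime P" using p by (simp add: P_def)
  have P1: "P > 1" using P prime_gt_1_int by blast
  have ip: "int (p - 1) = P - 1" using P1 by (simp add: P_def of_nat_diff)
  have eqm: "(x mod p = y mod p) \<longleftrightarrow> P dvd (int x - int y)" for x y :: nat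
    by (simp add: P_def mod_eq_dvd_iff [symmetric] zmod_int [symmetric])
  have E1: "(t1+t2+t3) mod p = 1 mod p \<longleftrightarrow> P dvd (int t1 + int t2 + int t3 - 1)"
    using eqm[of "t1+t2+t3" 1] by simp
  have E2: "((p-1)*t3) mod p = (t1*t2) mod p \<longleftrightarrow> P dvd (int t3 + int t1 * int t2)"
  proof -
    have "((p-1)*t3) mod p = (t1*t2) mod p \<longleftrightarrow> P dvd ((P - 1) * int t3 - int t1 * int t2)"
      using eqm[of "(p-1)*t3" "t1*t2"] ip by simp
    also have "(P - 1) * int t3 - int t1 * int t2 = P * int t3 - (int t3 + int t1 * int t2)"
      by (simp add: algebra_simps)
    also have "P dvd \<dots> \<longleftrightarrow> P dvd (int t3 + int t1 * int t2)"
      by (simp add: dvd_diff_right_iff)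
    finally show ?thesis .
  qed
  have E3: "t3 = ((p-1)*t1*t2) mod p \<longleftrightarrow> P dvd (int t3 + int t1 * int t2)"
  proof -
    have "t3 = t3 mod p" using u3 by simp
    hence "t3 = ((p-1)*t1*t2) mod p \<longleftrightarrow> t3 mod p = ((p-1)*t1*t2) mod p" by simp
    also have "\<dots> \<longleftrightarrow> P dvd (int t3 - (P - 1) * int t1 * int t2)"
      using eqm[of t3 "(p-1)*t1*t2"] ip by simp
    also have "int t3 - (P - 1) * int t1 * int t2 = (int t3 + int t1 * int t2) - P * (int t1 * int t2)"
      by (simp add: algebra_simps)
    also have "P dvd \<dots> \<longleftrightarrow> P dvd (int t3 + int t1 * int t2)"
      by (simp add: dvd_diff_left_iff)
    finally show ?thesis .
  qed
  have one: "t = 1" if "t \<in> {1..<p}" "P dvd (int t - 1)" for t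
  proof -
    have "int t mod P = 1 mod P" using that(2) by (simp add: mod_eq_dvd_iff)
    thus ?thesis using that(1) P1 by (simp add: P_def zmod_int[symmetric])
  qed
  show ?thesis
  proof
    assume h: "(t1+t2+t3) mod p = 1 mod p \<and> ((p-1)*t3) mod p = (t1*t2) mod p"
    hence d1: "P dvd (int t1 + int t2 + int t3 - 1)" and d2: "P dvd (int t3 + int t1 * int t2)"
      using E1 E2 by auto
    have "(int t1 + int t2 + int t3 - 1) - (int t3 + int t1 * int t2) = - ((int t1 - 1) * (int t2 - 1))"
      by (simp add: algebra_simps)
    moreover have "P dvd (int t1 + int t2 + int t3 - 1) - (int t3 + int t1 * int t2)"
      using d1 d2 by (rule dvd_diff)
    ultimately have "P dvd (int t1 - 1) * (int t2 - 1)" by simp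
    hence "P dvd (int t1 - 1) \<or> P dvd (int t2 - 1)" using P prime_dvd_mult_iff by blast
    hence "t1 = 1 \<or> t2 = 1" using one u1 u2 by blast
    thus "(t1 = 1 \<or> t2 = 1) \<and> t3 = ((p-1)*t1*t2) mod p" using E3 d2 by simp
  next
    assume h: "(t1 = 1 \<or> t2 = 1) \<and> t3 = ((p-1)*t1*t2) mod p"
    hence d2: "P dvd (int t3 + int t1 * int t2)" using E3 by simp
    have eq: "int t1 + int t2 + int t3 - 1 = int t3 + int t1 * int t2" using h by auto
    have d1: "P dvd (int t1 + int t2 + int t3 - 1)" by (subst eq) (rule d2)
    show "(t1+t2+t3) mod p = 1 mod p \<and> ((p-1)*t3) mod p = (t1*t2) mod p"
      using E1 E2 d1 d2 by blast
  qed
qed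

lemma psi5:
  fixes p :: nat
  assumes p: "prime p" and m: "mchar p \<psi>" and o: "char_order p \<psi> = 5"
  shows "\<forall>x\<in>{1..<p}. \<psi> x ^ 5 = 1"
proof -
  define Q where "Q = (\<lambda>n::nat. n > 0 \<and> (\<forall>x\<in>{1..<p}. \<psi> x ^ n = 1))"
  have "Q (p-1)" unfolding Q_def using mchar_fermat[OF p m] prime_gt_1_nat[OF p] by simp
  hence "Q (LEAST n. Q n)" by (rule LeastI)
  moreover have "(LEAST n. Q n) = 5" using o by (simp add: char_order_def Q_def)
  ultimately show ?thesis by (simp add: Q_def)
qed

lemma psi_nt:
  fixes p :: nat
  assumes p: "prime p" and m: "mchar p \<psi>" and o: "char_order p \<psi> = 5" and k: "0 < k" "k < 5"
  shows "\<exists>x\<in>{1..<p}. \<psi> x ^ k \<noteq> 1"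
proof -
  define Q where "Q = (\<lambda>n::nat. n > 0 \<and> (\<forall>x\<in>{1..<p}. \<psi> x ^ n = 1))"
  have "(LEAST n. Q n) = 5" using o by (simp add: char_order_def Q_def)
  hence "\<not> Q k" using not_less_Least[of k Q] k by simp
  thus ?thesis using k by (simp add: Q_def)
qed

lemma psi_m1:
  fixes p :: nat
  assumes p: "prime p" and p2: "2 < p" and m: "mchar p \<psi>" and o: "char_order p \<psi> = 5"
  shows "\<psi> (p - 1) = 1"
proof -
  have u: "p - 1 \<in> {1..<p}" using p2 by simp
  obtain q where q: "p = q + 2" using p2 by (metis add.commute less_imp_add_positive add_2_eq_Suc less_Suc_eq_0_disj nat.simps(3) Suc_1 add_Suc_right)
  have "(p-1)*(p-1) = p*q + 1" unfolding q by (simp add: algebra_simps)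
  moreover have "(p*q + 1) mod p = 1 mod p" by (metis mod_mult_self3 add.commute mult.commute)
  moreover have "1 mod p = 1" using p2 by simp
  ultimately have "((p-1)*(p-1)) mod p = 1" by simp
  hence "\<psi> (p-1) * \<psi> (p-1) = 1" using mchar_mult[OF m u u] mchar_1[OF m] by simp
  moreover have "\<psi> (p-1) ^ 5 = 1" using psi5[OF p m o] u by blast
  ultimately show ?thesis by (simp add: numeral_eq_Suc)
qed

lemma cpow_U: "prime p \<Longrightarrow> mchar p \<psi> \<Longrightarrow> x \<in> {1..<p} \<Longrightarrow> cpow \<psi> a x = \<psi> x powi a"
  using mchar_nz by (simp add: cpow_def)

lemma sum_shift0:
  fixes p :: nat
  assumes p: "prime p" and m: "mchar p \<psi>" and x: "x \<in> {1..<p}" and nx: "\<psi> x ^ k \<noteq> 1"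
  shows "(\<Sum>t\<in>{1..<p}. \<psi> t ^ k) = 0"
proof -
  have "(\<Sum>t\<in>{1..<p}. \<psi> t ^ k) = (\<Sum>t\<in>{1..<p}. \<psi> ((x*t) mod p) ^ k)"
    by (rule sum.reindex_bij_betw[OF mult_bij[OF p x], symmetric])
  also have "\<dots> = (\<Sum>t\<in>{1..<p}. \<psi> x ^ k * \<psi> t ^ k)"
    by (rule sum.cong[OF refl]) (simp add: mchar_mult[OF m x] power_mult_distrib)
  also have "\<dots> = \<psi> x ^ k * (\<Sum>t\<in>{1..<p}. \<psi> t ^ k)" by (simp add: sum_distrib_left)
  finally have "(1 - \<psi> x ^ k) * (\<Sum>t\<in>{1..<p}. \<psi> t ^ k) = 0" by (simp add: algebra_simps)
  thus ?thesis using nx by simp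
qed

lemma psisum:
  fixes p :: nat and k :: int
  assumes p: "prime p" and m: "mchar p \<psi>" and o: "char_order p \<psi> = 5" and k: "\<not> 5 dvd k"
  shows "(\<Sum>t\<in>{1..<p}. \<psi> t powi k) = 0"
proof -
  define r where "r = nat (k mod 5)"
  have k0: "k mod 5 \<noteq> 0" using k by (simp add: dvd_eq_mod_eq_0)
  have k1: "0 \<le> k mod 5" "k mod 5 < 5" by simp_all
  have r0: "0 < r" and r5: "r < 5" using k0 k1 unfolding r_def by linarith+
  have "(\<Sum>t\<in>{1..<p}. \<psi> t powi k) = (\<Sum>t\<in>{1..<p}. \<psi> t ^ r)"
  proof (rule sum.cong[OF refl])
    fix t assume t: "t \<in> {1..<p}"
    have nz: "\<psi> t \<noteq> 0" using mchar_nz[OF p m t] .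
    have "\<psi> t powi k = \<psi> t powi (5 * (k div 5) + k mod 5)" by simp
    also have "\<dots> = \<psi> t powi (5 * (k div 5)) * \<psi> t powi (k mod 5)" using nz by (rule power_int_add[OF disjI1])
    also have "\<psi> t powi (5 * (k div 5)) = (\<psi> t powi 5) powi (k div 5)" by (rule power_int_mult)
    also have "\<psi> t powi 5 = 1" using psi5[OF p m o] t by simp
    also have "k mod 5 = int r" using r_def by simp
    finally show "\<psi> t powi k = \<psi> t ^ r" by simp
  qed
  also have "\<dots> = 0"
  proof -
    obtain x where "x \<in> {1..<p}" "\<psi> x ^ r \<noteq> 1" using psi_nt[OF p m o r0 r5] by blast
    thus ?thesis using sum_shift0[OF p m] by blast
  qed
  finally show ?thesis .
qed

theorem lemma2p2:
  fixes p :: nat and \<psi> :: "nat \<Rightarrow> complex" and a b c :: int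
  assumes "prime p" and "p mod 5 = 1"
    and "\<psi> \<in> chars p" and "char_order p \<psi> = 5"
    and "\<not> (5 dvd (a + c))" and "\<not> (5 dvd (b + c))"
  shows "(\<Sum>\<chi>\<in>chars p. \<chi> (p - 1) *
            jacobi3 p (cmul (cinv \<chi>) (cpow \<psi> a)) (cmul (cinv \<chi>) (cpow \<psi> b)) (cmul \<chi> (cpow \<psi> c)))
         = - (of_nat p - 1)"
proof -
  have p: "prime p" by fact
  have p2: "2 < p"
  proof -
    have "p \<ge> 2" using prime_ge_2_nat[OF p] .
    moreover have "p \<noteq> 2" using assms(2) by auto
    ultimately show ?thesis by simp
  qed
  obtain g where "gen p g" using gen_exists[OF p p2] by blast
  then interpret gen p g .
  have m: "mchar p \<psi>" using assms(3) by (simp add: chars_def)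
  have o: "char_order p \<psi> = 5" by fact
  define U where "U = {1..<p}"
  have u1: "1 \<in> U" and um: "p - 1 \<in> U" using p2 by (simp_all add: U_def)
  define T where "T = {(t1, t2, t3). t1 < p \<and> t2 < p \<and> t3 < p \<and> (t1 + t2 + t3) mod p = 1 mod p}"
  define \<Psi> where "\<Psi> = (\<lambda>(t1::nat, t2::nat, t3::nat). cpow \<psi> a t1 * cpow \<psi> b t2 * cpow \<psi> c t3)"
  define Cd where "Cd = (\<lambda>(t1::nat, t2::nat, t3::nat). t1 \<in> U \<and> t2 \<in> U \<and> t3 \<in> U \<and> ((p-1)*t3) mod p = (t1*t2) mod p)"
  define F where "F = (\<lambda>\<chi> (t1::nat, t2::nat, t3::nat). cmul (cinv \<chi>) (cpow \<psi> a) t1 * cmul (cinv \<chi>) (cpow \<psi> b) t2 * cmul \<chi> (cpow \<psi> c) t3)"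
  have fT: "finite T"
  proof (rule finite_subset)
    show "T \<subseteq> {..<p} \<times> {..<p} \<times> {..<p}" by (auto simp: T_def)
  qed simp
  have "(\<Sum>\<chi>\<in>chars p. \<chi> (p - 1) *
            jacobi3 p (cmul (cinv \<chi>) (cpow \<psi> a)) (cmul (cinv \<chi>) (cpow \<psi> b)) (cmul \<chi> (cpow \<psi> c)))
      = (\<Sum>\<chi>\<in>chars p. \<Sum>t\<in>T. \<chi> (p - 1) * F \<chi> t)"
    unfolding jacobi3_def T_def[symmetric] F_def by (simp add: sum_distrib_left)
  also have "\<dots> = (\<Sum>t\<in>T. \<Sum>\<chi>\<in>chars p. \<chi> (p - 1) * F \<chi> t)" by (rule sum.swap)
  also have "\<dots> = (\<Sum>t\<in>T. if Cd t then of_nat (p - 1) * \<Psi> t else 0)"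
  proof (rule sum.cong[OF refl])
    fix t assume "t \<in> T"
    then obtain t1 t2 t3 where t: "t = (t1, t2, t3)" and lt: "t1 < p" "t2 < p" "t3 < p"
      by (auto simp: T_def)
    have fac: "\<chi> (p - 1) * F \<chi> t = \<Psi> t * (\<chi> (p-1) * \<chi> t3 * inverse (\<chi> t1 * \<chi> t2))" for \<chi>
      unfolding t F_def \<Psi>_def by (simp add: cmul_def cinv_def mult_ac)
    show "(\<Sum>\<chi>\<in>chars p. \<chi> (p - 1) * F \<chi> t) = (if Cd t then of_nat (p - 1) * \<Psi> t else 0)"
    proof (cases "t1 \<in> U \<and> t2 \<in> U \<and> t3 \<in> U")
      case True
      hence A: "((p-1)*t3) mod p \<in> U" and B: "(t1*t2) mod p \<in> U"
        using modU[OF p] um unfolding U_def by blast+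
      have "(\<Sum>\<chi>\<in>chars p. \<chi> (p - 1) * F \<chi> t)
          = (\<Sum>\<chi>\<in>chars p. \<Psi> t * (\<chi> (((p-1)*t3) mod p) * inverse (\<chi> ((t1*t2) mod p))))"
      proof (rule sum.cong[OF refl])
        fix \<chi> assume "\<chi> \<in> chars p"
        hence c: "mchar p \<chi>" by (simp add: chars_def)
        show "\<chi> (p - 1) * F \<chi> t = \<Psi> t * (\<chi> (((p-1)*t3) mod p) * inverse (\<chi> ((t1*t2) mod p)))"
          unfolding fac using True um mchar_mult[OF c, of "p-1" t3] mchar_mult[OF c, of t1 t2]
          by (simp add: U_def)
      qed
      also have "\<dots> = \<Psi> t * (if ((p-1)*t3) mod p = (t1*t2) mod p then of_nat (p - 1) else 0)"
        using orth2[of "((p-1)*t3) mod p" "(t1*t2) mod p"] A B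
        by (simp add: sum_distrib_left[symmetric] U_def)
      also have "\<dots> = (if Cd t then of_nat (p - 1) * \<Psi> t else 0)"
        using True by (simp add: Cd_def t mult.commute)
      finally show ?thesis .
    next
      case False
      hence "t1 = 0 \<or> t2 = 0 \<or> t3 = 0" using lt by (auto simp: U_def)
      hence z: "\<chi> (p - 1) * F \<chi> t = 0" if "\<chi> \<in> chars p" for \<chi>
        using that mchar_0[of p \<chi>] unfolding fac by (auto simp: chars_def)
      have "(\<Sum>\<chi>\<in>chars p. \<chi> (p - 1) * F \<chi> t) = 0" by (rule sum.neutral) (use z in blast)
      moreover have "\<not> Cd t" using False unfolding Cd_def t by auto
      ultimately show ?thesis by simp
    qed
  qed
  also have "\<dots> = of_nat (p - 1) * (\<Sum>t\<in>{t\<in>T. Cd t}. \<Psi> t)"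
    by (simp add: sum.inter_filter[OF fT] sum_distrib_left if_distrib cong: if_cong)
  finally have S1: "(\<Sum>\<chi>\<in>chars p. \<chi> (p - 1) *
            jacobi3 p (cmul (cinv \<chi>) (cpow \<psi> a)) (cmul (cinv \<chi>) (cpow \<psi> b)) (cmul \<chi> (cpow \<psi> c)))
      = of_nat (p - 1) * (\<Sum>t\<in>{t\<in>T. Cd t}. \<Psi> t)" .

  define h where "h = (\<lambda>(t1::nat, t2::nat). (t1, t2, ((p-1)*t1*t2) mod p))"
  define P where "P = ({1} \<times> U) \<union> (U \<times> {1})"
  have t3U: "((p-1)*t1*t2) mod p \<in> U" if "t1 \<in> U" "t2 \<in> U" for t1 t2
  proof -
    have "((p-1)*t1) mod p \<in> U" using modU[OF p] um that unfolding U_def by blast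
    hence "((((p-1)*t1) mod p) * t2) mod p \<in> U" using modU[OF p] that unfolding U_def by blast
    thus ?thesis by (simp add: mod_mult_left_eq)
  qed
  have setEq: "{t\<in>T. Cd t} = h ` P"
  proof
    show "{t\<in>T. Cd t} \<subseteq> h ` P"
    proof
      fix t assume "t \<in> {t\<in>T. Cd t}"
      then obtain t1 t2 t3 where t: "t = (t1, t2, t3)" and tT: "(t1 + t2 + t3) mod p = 1 mod p"
        and c: "t1 \<in> U" "t2 \<in> U" "t3 \<in> U" "((p-1)*t3) mod p = (t1*t2) mod p"
        by (auto simp: T_def Cd_def)
      have "(t1 = 1 \<or> t2 = 1) \<and> t3 = ((p-1)*t1*t2) mod p"
        using charT[OF p, of t1 t2 t3] c tT unfolding U_def by blast
      hence "t = h (t1, t2)" and "(t1, t2) \<in> P" using c by (auto simp: t h_def P_def)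
      thus "t \<in> h ` P" by blast
    qed
    show "h ` P \<subseteq> {t\<in>T. Cd t}"
    proof
      fix t assume "t \<in> h ` P"
      then obtain q0 where t0: "t = h q0" and q0: "q0 \<in> P" by (rule imageE)
      obtain t1 t2 where qq: "q0 = (t1, t2)" by (cases q0)
      have t: "t = h (t1, t2)" and q: "(t1, t2) \<in> P" using t0 q0 qq by simp_all
      have c: "t1 \<in> U" "t2 \<in> U" "t1 = 1 \<or> t2 = 1" using q u1 by (auto simp: P_def)
      have c3: "((p-1)*t1*t2) mod p \<in> U" using t3U c by blast
      have "(t1 + t2 + ((p-1)*t1*t2) mod p) mod p = 1 mod p \<and>
            ((p-1)*(((p-1)*t1*t2) mod p)) mod p = (t1*t2) mod p"
        using charT[OF p, of t1 t2 "((p-1)*t1*t2) mod p"] c c3 unfolding U_def by blast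
      thus "t \<in> {t\<in>T. Cd t}" using c c3 by (simp add: t h_def T_def Cd_def U_def)
    qed
  qed
  have injh: "inj_on h P" by (rule inj_onI) (auto simp: h_def)
  have fU: "finite U" by (simp add: U_def)
  have "(\<Sum>t\<in>{t\<in>T. Cd t}. \<Psi> t) = (\<Sum>q\<in>P. \<Psi> (h q))"
    unfolding setEq by (rule sum.reindex[OF injh, unfolded comp_def])
  moreover have "(\<Sum>q\<in>P. \<Psi> (h q)) + (\<Sum>q\<in>({1} \<times> U) \<inter> (U \<times> {1}). \<Psi> (h q))
      = (\<Sum>q\<in>{1} \<times> U. \<Psi> (h q)) + (\<Sum>q\<in>U \<times> {1}. \<Psi> (h q))"
    unfolding P_def by (rule sum.union_inter) (simp_all add: fU)
  moreover have "({1} \<times> U) \<inter> (U \<times> {1}) = {(1::nat, 1::nat)}" using u1 by auto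
  moreover have "\<Psi> (h (1, 1)) = 1"
  proof -
    have "h (1,1) = (1, 1, p - 1)" using p2 by (simp add: h_def)
    thus ?thesis using cpow_U[OF p m] u1 um psi_m1[OF p p2 m o] mchar_1[OF m]
      by (simp add: \<Psi>_def U_def)
  qed
  moreover have "(\<Sum>q\<in>{1} \<times> U. \<Psi> (h q)) = 0"
  proof -
    have e: "{1} \<times> U = (\<lambda>t. (1::nat, t)) ` U" by auto
    have "(\<Sum>q\<in>{1} \<times> U. \<Psi> (h q)) = (\<Sum>t\<in>U. \<Psi> (h (1, t)))"
      unfolding e by (rule sum.reindex[unfolded comp_def]) (rule inj_onI, simp)
    also have "\<dots> = (\<Sum>t\<in>U. \<psi> t powi (b + c))"
    proof (rule sum.cong[OF refl])
      fix t assume tU: "t \<in> U"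
      have mU: "((p-1)*t) mod p \<in> U" using modU[OF p] um tU unfolding U_def by blast
      have nz: "\<psi> t \<noteq> 0" using mchar_nz[OF p m] tU by (simp add: U_def)
      have "\<psi> (((p-1)*t) mod p) = \<psi> t" using mchar_mult[OF m, of "p-1" t] um tU psi_m1[OF p p2 m o]
        by (simp add: U_def)
      hence "\<Psi> (h (1, t)) = \<psi> t powi b * \<psi> t powi c"
        using cpow_U[OF p m] u1 tU mU mchar_1[OF m] by (simp add: \<Psi>_def h_def U_def)
      also have "\<dots> = \<psi> t powi (b + c)" using power_int_add[of "\<psi> t" b c] nz by simp
      finally show "\<Psi> (h (1, t)) = \<psi> t powi (b + c)" .
    qed
    also have "\<dots> = 0" unfolding U_def by (rule psisum[OF p m o assms(6)])
    finally show ?thesis .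
  qed
  moreover have "(\<Sum>q\<in>U \<times> {1}. \<Psi> (h q)) = 0"
  proof -
    have e: "U \<times> {1} = (\<lambda>t. (t, 1::nat)) ` U" by auto
    have "(\<Sum>q\<in>U \<times> {1}. \<Psi> (h q)) = (\<Sum>t\<in>U. \<Psi> (h (t, 1)))"
      unfolding e by (rule sum.reindex[unfolded comp_def]) (rule inj_onI, simp)
    also have "\<dots> = (\<Sum>t\<in>U. \<psi> t powi (a + c))"
    proof (rule sum.cong[OF refl])
      fix t assume tU: "t \<in> U"
      have mU: "((p-1)*t) mod p \<in> U" using modU[OF p] um tU unfolding U_def by blast
      have nz: "\<psi> t \<noteq> 0" using mchar_nz[OF p m] tU by (simp add: U_def)
      have "\<psi> (((p-1)*t) mod p) = \<psi> t" using mchar_mult[OF m, of "p-1" t] um tU psi_m1[OF p p2 m o]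
        by (simp add: U_def)
      hence "\<Psi> (h (t, 1)) = \<psi> t powi a * \<psi> t powi c"
        using cpow_U[OF p m] u1 tU mU mchar_1[OF m] by (simp add: \<Psi>_def h_def U_def)
      also have "\<dots> = \<psi> t powi (a + c)" using power_int_add[of "\<psi> t" a c] nz by simp
      finally show "\<Psi> (h (t, 1)) = \<psi> t powi (a + c)" .
    qed
    also have "\<dots> = 0" unfolding U_def by (rule psisum[OF p m o assms(5)])
    finally show ?thesis .
  qed
  ultimately have "(\<Sum>t\<in>{t\<in>T. Cd t}. \<Psi> t) = -1"
    by (simp add: eq_neg_iff_add_eq_0)
  hence "of_nat (p - 1) * (\<Sum>t\<in>{t\<in>T. Cd t}. \<Psi> t) = - (of_nat p - (1::complex))"
    using p2 by (simp add: of_nat_diff)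
  thus ?thesis using S1 by simp
qed

end
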